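(* Let $(f,X)$ be a marked branched covering, let $\alpha$ be an arc satisfying the Blowing Up Conditions, let $n\ge1$, and let $(g,X)$ be obtained by blowing up $(f,X)$ $n$ times along $\alpha$. Suppose $\Lambda$ is an arc system in $(S^2,X)$ which is forward invariant under $f$ up to isotopy relative to $X$. If there exists a lift $\widetilde\Lambda$ under $f$ (of a subset of $\Lambda$) with $\widetilde\Lambda\simeq_X\Lambda$ and $\widetilde\Lambda\cap\mathrm{Int}(\alpha)=\emptyset$, then $\Lambda$ is forward invariant under $g$ up to isotopy relative to $X$.
   Context: Branched coverings of $S^2$ are orientation-preserving continuous maps locally of the form $z\mapsto z^k$, assumed postcritically finite; $C(f)$ is the critical set and $P(f)$ the closure of the union of its forward images. A marked branched covering $(f,X)$ has $X$ finite, $P(f)\subset X$, $f(X)\subset X$. An arc in $(S^2,Y)$ ($Y$ finite) is the image of $j:[0,1]\to S^2$ with $j(\{0,1\})\subset Y$ (endpoints $e$), $j|_{(0,1)}$ an embedding and $j((0,1))\cap Y=\emptyset$; $\simeq_Y$ is isotopy through such arcs. An arc system is a set of pairwise non-isotopic arcs in $(S^2,X)$; $\Lambda\simeq_X\Lambda'$ means each element of either is isotopic to a unique element of the other. A lift of an arc $\lambda$ under $f$ is the closure of a component of $f^{-1}(\lambda\setminus e(\lambda))$; a lift of an arc system $\Lambda_0$ is an arc system in $(S^2,X)$ whose elements are lifts of elements of $\Lambda_0$. $\Lambda$ is forward invariant under $f$ up to isotopy relative to $X$ if some subset $\Lambda_0\subset\Lambda$ has a lift $\widetilde\Lambda_0\simeq_X\Lambda$.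 Blowing Up Conditions for a closed embedded arc $\alpha$ with distinct endpoints $e_{\pm1}$: (1) $f|_\alpha$ is a homeomorphism; (2) $\alpha$ is a union of arcs $\alpha_1,\dots,\alpha_L$ in $(S^2,f^{-1}(X))$; (3) $\mathrm{Int}(\alpha)\cap(X\cup C(f))=\emptyset$. Blowing up $n$ times along $\alpha$: choose an open Jordan disc $W\supset\mathrm{Int}(\alpha)$ with $e(\alpha)\subset\partial W$, $\overline W\cap f^{-1}(X)=\alpha\cap f^{-1}(X)$, $f|_{\overline W}$ injective; choose a closed disc $D\subset W\cup e(\alpha)$ with $e(\alpha)\subset\partial D$ and a continuous map $c:S^2\setminus\mathrm{Int}(D)\to S^2$, the identity outside $W$, which is the extension of $h_1^{-1}$ for an isotopy $h_t$ ($h_0=\mathrm{id}$, $h_t=\mathrm{id}$ off $W$) of embeddings of $S^2\setminus\mathrm{Int}(\alpha)$ with $h_1(S^2\setminus\mathrm{Int}(\alpha))=S^2\setminus(D\setminus e(\alpha))$; $c$ maps each of the two boundary arcs $\partial D_\pm$ of $D$ from $e_{-1}$ to $e_{+1}$ homeomorphically onto $\alpha$. With $\phi_n(z)=A_2((A_1(z))^{2n})$ on the closed unit disc $\overline\Delta$, $A_1(z)=-i\frac{z+1}{z-1}$, $A_2(z)=\frac{z-1}{z+1}$, $\partial\Delta_\pm=\partial\Delta\cap\{\pm\mathrm{Im}z\ge0\}$, choose a homeomorphism $h'$ of the sphere with $h'([-1,1])=f(\alpha)$, $h'(\pm1)=f(e_{\pm1})$, and a homeomorphism $h'':D\to\overline\Delta$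 equal on $\partial D_\pm$ to $(\phi_n|_{\partial\Delta_\pm})^{-1}\circ(h')^{-1}\circ f\circ c$. Set $g=f\circ c$ on $S^2\setminus\mathrm{Int}(D)$ and $g=h'\circ\phi_n\circ h''$ on $D$. *)

theory Defs
  imports "HOL-Analysis.Analysis" "HOL-Complex_Analysis.Winding_Numbers"
begin

type_synonym pt = "real \<times> real \<times> real"

definition S2 :: "pt set" where
  "S2 = sphere 0 1"

definition north :: pt where "north = (0, 0, 1)"

text \<open>Stereographic projection from the north pole and its inverse
  (the inverse sends infinity, i.e. the north pole, nowhere: it is a map C -> S2 - {north}).\<close>
definition stereo :: "pt \<Rightarrow> complex" where
  "stereo x = Complex (fst x / (1 - snd (snd x))) (fst (snd x) / (1 - snd (snd x)))"

definition istereo :: "complex \<Rightarrow> pt" where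
  "istereo w = (2 * Re w / ((cmod w)\<^sup>2 + 1), 2 * Im w / ((cmod w)\<^sup>2 + 1),
                ((cmod w)\<^sup>2 - 1) / ((cmod w)\<^sup>2 + 1))"

text \<open>Orientation-preserving planar embeddings: small positively oriented circles
  are mapped to curves winding once (positively) around the image of the centre.\<close>
definition op_planar :: "(complex \<Rightarrow> complex) \<Rightarrow> complex set \<Rightarrow> bool" where
  "op_planar h A \<longleftrightarrow> (\<forall>z\<in>A. \<exists>e>0. \<forall>r. 0 < r \<and> r < e \<longrightarrow>
      cball z r \<subseteq> A \<and> winding_number (h \<circ> circlepath z r) (h z) = 1)"

text \<open>A chart of S2 is orientation-preserving (w.r.t. the orientation of S2 given by
  stereographic projection) if it is so when read in the stereographic coordinate.\<close>
definition op_chart :: "(pt \<Rightarrow> complex) \<Rightarrow> pt set \<Rightarrow> bool" where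
  "op_chart \<phi> U \<longleftrightarrow> op_planar (\<phi> \<circ> istereo) (stereo ` (U - {north}))"

definition local_form :: "(pt \<Rightarrow> pt) \<Rightarrow> pt \<Rightarrow> nat \<Rightarrow> bool" where
  "local_form f p k \<longleftrightarrow> (\<exists>U V \<phi> \<phi>' \<psi> \<psi>'.
      openin (top_of_set S2) U \<and> p \<in> U \<and> openin (top_of_set S2) V \<and> f p \<in> V \<and>
      homeomorphism U (ball 0 1) \<phi> \<phi>' \<and> homeomorphism V (ball 0 1) \<psi> \<psi>' \<and>
      op_chart \<phi> U \<and> op_chart \<psi> V \<and> \<phi> p = 0 \<and> \<psi> (f p) = 0 \<and>
      (\<forall>x\<in>U. \<psi> (f x) = (\<phi> x) ^ k))"

definition crit :: "(pt \<Rightarrow> pt) \<Rightarrow> pt set" where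
  "crit f = {p \<in> S2. \<exists>k\<ge>2. local_form f p k}"

definition postcrit :: "(pt \<Rightarrow> pt) \<Rightarrow> pt set" where
  "postcrit f = closure (\<Union>m\<in>{1..}. (f ^^ m) ` crit f)"

definition branched_covering :: "(pt \<Rightarrow> pt) \<Rightarrow> bool" where
  "branched_covering f \<longleftrightarrow> continuous_on S2 f \<and> f ` S2 \<subseteq> S2 \<and>
     (\<forall>p\<in>S2. \<exists>k\<ge>1. local_form f p k) \<and> finite (postcrit f)"

definition marked_bc :: "(pt \<Rightarrow> pt) \<Rightarrow> pt set \<Rightarrow> bool" where
  "marked_bc f X \<longleftrightarrow> branched_covering f \<and> finite X \<and> X \<subseteq> S2 \<and>
     postcrit f \<subseteq> X \<and> f ` X \<subseteq> X"

definition arc_param :: "pt set \<Rightarrow> (real \<Rightarrow> pt) \<Rightarrow> bool" where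
  "arc_param Y j \<longleftrightarrow> continuous_on {0..1} j \<and> j ` {0..1} \<subseteq> S2 \<and>
     j 0 \<in> Y \<and> j 1 \<in> Y \<and>
     (\<exists>j'. homeomorphism {0<..<1} (j ` {0<..<1}) j j') \<and>
     j ` {0<..<1} \<inter> Y = {}"

definition arc_in :: "pt set \<Rightarrow> pt set \<Rightarrow> bool" where
  "arc_in Y A \<longleftrightarrow> (\<exists>j. arc_param Y j \<and> A = j ` {0..1})"

definition arc_isotopic :: "pt set \<Rightarrow> pt set \<Rightarrow> pt set \<Rightarrow> bool" where
  "arc_isotopic Y A B \<longleftrightarrow> (\<exists>H :: real \<times> real \<Rightarrow> pt.
      continuous_on ({0..1} \<times> {0..1}) H \<and>
      (\<forall>t\<in>{0..1}. arc_param Y (\<lambda>s. H (t, s))) \<and>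
      A = (\<lambda>s. H (0, s)) ` {0..1} \<and> B = (\<lambda>s. H (1, s)) ` {0..1})"

definition arc_system :: "pt set \<Rightarrow> pt set set \<Rightarrow> bool" where
  "arc_system X \<Lambda> \<longleftrightarrow> (\<forall>la\<in>\<Lambda>. arc_in X la) \<and>
     (\<forall>la\<in>\<Lambda>. \<forall>\<mu>\<in>\<Lambda>. la \<noteq> \<mu> \<longrightarrow> \<not> arc_isotopic X la \<mu>)"

definition sys_isotopic :: "pt set \<Rightarrow> pt set set \<Rightarrow> pt set set \<Rightarrow> bool" where
  "sys_isotopic X L L' \<longleftrightarrow> (\<forall>la\<in>L. \<exists>!\<mu>. \<mu> \<in> L' \<and> arc_isotopic X la \<mu>) \<and>
     (\<forall>\<mu>\<in>L'. \<exists>!la. la \<in> L \<and> arc_isotopic X \<mu> la)"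

text \<open>Lift of an arc lambda in (S2,X): closure of a component of f^{-1}(lambda - e(lambda));
  the endpoints of an arc in (S2,X) are exactly its points in X.\<close>
definition lift_of :: "(pt \<Rightarrow> pt) \<Rightarrow> pt set \<Rightarrow> pt set \<Rightarrow> pt set \<Rightarrow> bool" where
  "lift_of f X la \<mu> \<longleftrightarrow> (\<exists>x \<in> S2 \<inter> f -` (la - X).
      \<mu> = closure (connected_component_set (S2 \<inter> f -` (la - X)) x))"

definition lift_system :: "(pt \<Rightarrow> pt) \<Rightarrow> pt set \<Rightarrow> pt set set \<Rightarrow> pt set set \<Rightarrow> bool" where
  "lift_system f X \<Lambda>0 L \<longleftrightarrow> arc_system X L \<and> (\<forall>\<mu>\<in>L. \<exists>la\<in>\<Lambda>0. lift_of f X la \<mu>)"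

definition forward_invariant :: "(pt \<Rightarrow> pt) \<Rightarrow> pt set \<Rightarrow> pt set set \<Rightarrow> bool" where
  "forward_invariant f X \<Lambda> \<longleftrightarrow>
     (\<exists>\<Lambda>0 \<subseteq> \<Lambda>. \<exists>L. lift_system f X \<Lambda>0 L \<and> sys_isotopic X L \<Lambda>)"

definition blowing_up_conditions :: "(pt \<Rightarrow> pt) \<Rightarrow> pt set \<Rightarrow> (real \<Rightarrow> pt) \<Rightarrow> bool" where
  "blowing_up_conditions f X j \<longleftrightarrow>
     continuous_on {0..1} j \<and> inj_on j {0..1} \<and> j ` {0..1} \<subseteq> S2 \<and>
     (\<exists>k. homeomorphism (j ` {0..1}) (f ` j ` {0..1}) f k) \<and>
     (\<exists>(L::nat) (as :: nat \<Rightarrow> pt set). L \<ge> 1 \<and> (\<forall>i<L. arc_in (S2 \<inter> f -` X) (as i)) \<and> j ` {0..1} = (\<Union>i<L. as i)) \<and>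
     j ` {0<..<1} \<inter> (X \<union> crit f) = {}"

definition jordan_open_disc :: "pt set \<Rightarrow> bool" where
  "jordan_open_disc W \<longleftrightarrow> (\<exists>\<gamma>. simple_path \<gamma> \<and> pathfinish \<gamma> = pathstart \<gamma> \<and>
     path_image \<gamma> \<subseteq> S2 \<and>
     (\<exists>x \<in> S2 - path_image \<gamma>. W = connected_component_set (S2 - path_image \<gamma>) x))"

definition simple_arc_from_to :: "pt set \<Rightarrow> pt \<Rightarrow> pt \<Rightarrow> bool" where
  "simple_arc_from_to A a b \<longleftrightarrow> (\<exists>j :: real \<Rightarrow> pt. continuous_on {0..1} j \<and> inj_on j {0..1} \<and>
     j 0 = a \<and> j 1 = b \<and> A = j ` {0..1})"

definition A1 :: "complex \<Rightarrow> complex" where "A1 z = - \<i> * (z + 1) / (z - 1)"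
definition A2 :: "complex \<Rightarrow> complex" where "A2 z = (z - 1) / (z + 1)"

text \<open>phi_n(z) = A2((A1 z)^(2n)) as a map of the closed unit disc into the Riemann sphere S2
  (via inverse stereographic projection, infinity = north pole), with the values at the
  poles of A1 and A2 given by continuity.\<close>
definition phi_n :: "nat \<Rightarrow> complex \<Rightarrow> pt" where
  "phi_n n z = (if z = 1 then istereo 1
               else if (A1 z) ^ (2 * n) = -1 then north
               else istereo (A2 ((A1 z) ^ (2 * n))))"

definition disc_plus :: "complex set" where "disc_plus = {z. cmod z = 1 \<and> Im z \<ge> 0}"
definition disc_minus :: "complex set" where "disc_minus = {z. cmod z = 1 \<and> Im z \<le> 0}"

definition blown_up :: "(pt \<Rightarrow> pt) \<Rightarrow> pt set \<Rightarrow> (real \<Rightarrow> pt) \<Rightarrow> nat \<Rightarrow> (pt \<Rightarrow> pt) \<Rightarrow> bool" where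
  "blown_up f X j n g \<longleftrightarrow>
    (let \<alpha> = j ` {0..1}; I\<alpha> = j ` {0<..<1}; em = j 0; ep = j 1 in
     \<exists>W D \<psi> \<psi>' Dp Dm h c h' h'i h''.
       \<comment> \<open>the open Jordan disc W\<close>
       jordan_open_disc W \<and> I\<alpha> \<subseteq> W \<and> {em, ep} \<subseteq> closure W - W \<and>
       closure W \<inter> (S2 \<inter> f -` X) = \<alpha> \<inter> (S2 \<inter> f -` X) \<and> inj_on f (closure W) \<and>
       \<comment> \<open>the closed disc D, with interior psi(ball) and boundary psi(circle)\<close>
       homeomorphism (cball (0::complex) 1) D \<psi> \<psi>' \<and> D \<subseteq> W \<union> {em, ep} \<and>
       {em, ep} \<subseteq> \<psi> ` sphere 0 1 \<and>
       \<comment> \<open>its two boundary arcs from e_{-1} to e_{+1}\<close>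
       Dp \<union> Dm = \<psi> ` sphere 0 1 \<and> Dp \<inter> Dm = {em, ep} \<and>
       simple_arc_from_to Dp em ep \<and> simple_arc_from_to Dm em ep \<and>
       \<comment> \<open>the isotopy h_t of embeddings of S2 - Int(alpha)\<close>
       continuous_on ({0..1::real} \<times> (S2 - I\<alpha>)) (\<lambda>(t, x). h t x) \<and>
       (\<forall>t\<in>{0..1}. h t ` (S2 - I\<alpha>) \<subseteq> S2 \<and>
          (\<exists>k. homeomorphism (S2 - I\<alpha>) (h t ` (S2 - I\<alpha>)) (h t) k)) \<and>
       (\<forall>x\<in>S2 - I\<alpha>. h 0 x = x) \<and>
       (\<forall>t\<in>{0..1}. \<forall>x\<in>S2 - I\<alpha> - W. h t x = x) \<and>
       h 1 ` (S2 - I\<alpha>) = S2 - (D - {em, ep}) \<and>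
       \<comment> \<open>the map c, extension of h_1^{-1}\<close>
       continuous_on (S2 - \<psi> ` ball 0 1) c \<and> c ` (S2 - \<psi> ` ball 0 1) \<subseteq> S2 \<and>
       (\<forall>x\<in>S2 - (D - {em, ep}). c x = inv_into (S2 - I\<alpha>) (h 1) x) \<and>
       (\<forall>x\<in>S2 - \<psi> ` ball 0 1 - W. c x = x) \<and>
       (\<exists>k. homeomorphism Dp \<alpha> c k) \<and> (\<exists>k. homeomorphism Dm \<alpha> c k) \<and>
       \<comment> \<open>the homeomorphism h' of the sphere\<close>
       homeomorphism S2 S2 h' h'i \<and>
       h' ` (istereo ` (complex_of_real ` {-1..1})) = f ` \<alpha> \<and>
       h' (istereo (-1)) = f em \<and> h' (istereo 1) = f ep \<and>
       \<comment> \<open>the homeomorphism h'' of D onto the closed unit disc\<close>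
       (\<exists>k. homeomorphism D (cball 0 1) h'' k) \<and>
       (\<forall>x\<in>Dp. h'' x = inv_into disc_plus (phi_n n) (inv_into S2 h' (f (c x)))) \<and>
       (\<forall>x\<in>Dm. h'' x = inv_into disc_minus (phi_n n) (inv_into S2 h' (f (c x)))) \<and>
       \<comment> \<open>the resulting map g\<close>
       (\<forall>x\<in>S2 - \<psi> ` ball 0 1. g x = f (c x)) \<and>
       (\<forall>x\<in>D. g x = h' (phi_n n (h'' x))))"

end

theory Submission
  imports Defs "HOL-Complex_Analysis.Complex_Analysis"
begin

lemma pow_open_map:
  fixes G :: "complex set" assumes "open G" "k \<ge> 1"
  shows "open ((\<lambda>z. z ^ k) ` G)"
proof (rule open_mapping_thm[where S=UNIV])
  show "(\<lambda>z. z ^ k) holomorphic_on UNIV" by (intro holomorphic_intros)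
  show "\<not> (\<lambda>z::complex. z ^ k) constant_on UNIV"
  proof
    assume "(\<lambda>z::complex. z ^ k) constant_on UNIV"
    then obtain c where "\<And>z::complex. z ^ k = c" unfolding constant_on_def by blast
    from this[of 0] this[of 1] assms(2) show False by (cases k) auto
  qed
qed (use assms in auto)

lemma pow_preimage_connected:
  fixes T :: "complex set"
  assumes T: "compact T" "connected T" "0 \<in> T" and k: "k \<ge> 1"
  shows "connected {z. z ^ k \<in> T}"
proof -
  define S where "S = {z::complex. z ^ k \<in> T}"
  have clS: "closed S" unfolding S_def
  proof -
    have "continuous_on UNIV (\<lambda>z::complex. z ^ k)" by (intro continuous_intros)
    then show "closed {z::complex. z ^ k \<in> T}"
      using closed_vimage[of T "\<lambda>z::complex. z ^ k"] compact_imp_closed[OF T(1)]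
      by (simp add: vimage_def)
  qed
  obtain B where B: "\<And>t. t \<in> T \<Longrightarrow> norm t \<le> B"
    using compact_imp_bounded[OF T(1)] bounded_iff by blast
  have "bounded S"
  proof -
    have "norm z \<le> max 1 B" if "z \<in> S" for z
    proof (cases "norm z \<le> 1")
      case False
      then have "norm z \<le> norm z ^ k" using k
        by (metis less_eq_real_def not_le power_increasing power_one_right)
      also have "\<dots> = norm (z ^ k)" by (simp add: norm_power)
      also have "\<dots> \<le> B" using B that by (auto simp: S_def)
      finally show ?thesis by simp
    qed simp
    then show ?thesis unfolding bounded_iff by blast
  qed
  then have cS: "compact S" using clS by (simp add: compact_eq_bounded_closed)
  have key: "0 \<in> E" if E: "openin (top_of_set S) E" "closedin (top_of_set S) E" "E \<noteq> {}" for E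
  proof -
    let ?p = "\<lambda>z::complex. z ^ k"
    have sub: "?p ` E \<subseteq> T" using closedin_imp_subset[OF E(2)] by (auto simp: S_def)
    have "compact E" using E(2) cS closedin_compact by blast
    then have "compact (?p ` E)" by (intro compact_continuous_image continuous_intros)
    then have cl: "closedin (top_of_set T) (?p ` E)"
      using sub by (simp add: closed_subset compact_imp_closed)
    obtain G where G: "open G" "E = S \<inter> G" using E(1) by (auto simp: openin_open)
    have "?p ` E = T \<inter> ?p ` G" using G by (auto simp: S_def)
    then have op: "openin (top_of_set T) (?p ` E)"
      using pow_open_map[OF G(1) k] by (auto simp: openin_open)
    have "?p ` E = T" using T(2) cl op E(3) unfolding connected_clopen by blast
    then obtain z where "z \<in> E" "z ^ k = 0" using T(3) by (metis imageE)
    then show ?thesis using k by simp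
  qed
  show ?thesis unfolding S_def[symmetric] connected_clopen
  proof (intro allI impI)
    fix E assume E: "openin (top_of_set S) E \<and> closedin (top_of_set S) E"
    show "E = {} \<or> E = S"
    proof (rule ccontr)
      assume ne: "\<not> (E = {} \<or> E = S)"
      have E2: "openin (top_of_set S) (S - E)" "closedin (top_of_set S) (S - E)" "S - E \<noteq> {}"
        using E ne closedin_imp_subset openin_imp_subset by (auto intro: openin_diff closedin_diff)
      have "0 \<in> E" using key E ne by blast
      moreover have "0 \<in> S - E" using key[OF E2] .
      ultimately show False by blast
    qed
  qed
qed

lemma local_lift_open:
  assumes fc: "continuous_on S2 f" and fS: "f ` S2 \<subseteq> S2"
    and lfw: "local_form f w k" and k: "k \<ge> 1"
    and q: "arc_param X q" and la: "la = q ` {0..1}"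
    and w: "w \<in> S2" "f w \<in> la - X"
  shows "\<exists>N. openin (top_of_set S2) N \<and> w \<in> N \<and>
           (\<exists>P. connected P \<and> w \<in> P \<and> P \<subseteq> S2 \<inter> f -` (la - X) \<and>
                S2 \<inter> f -` (la - X) \<inter> N \<subseteq> P)"
proof -
  obtain U V \<phi> \<phi>' \<psi> \<psi>' where
    U1: "openin (top_of_set S2) U" and U2: "w \<in> U" and V1: "openin (top_of_set S2) V" and V2: "f w \<in> V"
    and hU: "homeomorphism U (ball 0 1) \<phi> \<phi>'" and hV: "homeomorphism V (ball 0 1) \<psi> \<psi>'"
    and "op_chart \<phi> U" "op_chart \<psi> V"
    and z1: "\<phi> w = 0" and z2: "\<psi> (f w) = 0" and eq: "\<forall>x\<in>U. \<psi> (f x) = (\<phi> x) ^ k"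
    using lfw unfolding local_form_def by (elim exE conjE) (rule that, assumption+)
  note U = U1 U2 note V = V1 V2 note z = z1 z2
  have qc: "continuous_on {0..1} q" and qS: "q ` {0..1} \<subseteq> S2" and q01: "q 0 \<in> X" "q 1 \<in> X"
    and qX: "q ` {0<..<1} \<inter> X = {}"
    using q unfolding arc_param_def by auto
  obtain q' where hq: "homeomorphism {0<..<1} (q ` {0<..<1}) q q'"
    using q unfolding arc_param_def by auto
  have qinj: "q' (q s) = s" if "s \<in> {0<..<1}" for s
    using hq that unfolding homeomorphism_def by auto
  define a where "a = f w"
  obtain s0 where s0: "s0 \<in> {0..1}" "q s0 = a" using w la a_def by auto
  have "s0 \<noteq> 0" "s0 \<noteq> 1" using s0 q01 w a_def by auto
  with s0 have s0': "0 < s0" "s0 < 1" by auto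
  have US: "U \<subseteq> S2" using U openin_imp_subset by blast
  define U0 where "U0 = U \<inter> (S2 \<inter> f -` V)"
  have pre: "openin (top_of_set S2) (S2 \<inter> f -` V)"
    by (rule continuous_openin_preimage[OF fc _ V(1)]) (use fS in auto)
  then have U0o: "openin (top_of_set S2) U0" unfolding U0_def using U(1) by blast
  have wU0: "w \<in> U0" unfolding U0_def using U V w by auto
  have U0U: "U0 \<subseteq> U" unfolding U0_def by auto
  have "openin (top_of_set U) U0" using openin_subset_trans[OF U0o U0U US] .
  then have "openin (top_of_set (ball 0 1)) (\<phi> ` U0)" using homeomorphism_imp_open_map[OF hU] by blast
  then have "open (\<phi> ` U0)" by (simp add: openin_open_eq)
  moreover have "0 \<in> \<phi> ` U0" using wU0 z by force
  ultimately obtain r where r: "r > 0" "ball 0 r \<subseteq> \<phi> ` U0" using open_contains_ball by blast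
  define \<rho> where "\<rho> = (r/2) ^ k"
  have \<rho>: "\<rho> > 0" unfolding \<rho>_def using r by simp
  have \<psi>c: "continuous_on V \<psi>" and \<psi>V: "\<psi> ` V = ball 0 1" and \<psi>inj: "\<And>v. v \<in> V \<Longrightarrow> \<psi>' (\<psi> v) = v"
    using hV unfolding homeomorphism_def by auto
  define V1 where "V1 = V \<inter> \<psi> -` ball 0 \<rho>"
  have "openin (top_of_set V) (V \<inter> \<psi> -` ball 0 \<rho>)"
    using continuous_openin_preimage_gen[OF \<psi>c, of "ball 0 \<rho>"] by simp
  then have V1o: "openin (top_of_set S2) V1" unfolding V1_def using V(1) openin_trans by blast
  have "openin (top_of_set {0..1}) ({0..1} \<inter> q -` V1)"
    using continuous_openin_preimage[OF qc _ V1o] qS by auto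
  moreover have "s0 \<in> {0..1} \<inter> q -` V1" using s0 V z \<rho> a_def unfolding V1_def by auto
  ultimately obtain e where e: "e > 0" "\<And>s. s \<in> {0..1} \<Longrightarrow> dist s s0 < e \<Longrightarrow> s \<in> {0..1} \<inter> q -` V1"
    unfolding openin_euclidean_subtopology_iff by blast
  define \<delta> where "\<delta> = min (e/2) (min (s0/2) ((1-s0)/2))"
  have \<delta>: "\<delta> > 0" "\<delta> < e" "\<delta> < s0" "\<delta> < 1 - s0" unfolding \<delta>_def using e s0' by (auto simp: min_def)
  define I where "I = {s0-\<delta>..s0+\<delta>}"
  have I01: "I \<subseteq> {0<..<1}" unfolding I_def using \<delta> by auto
  have IV1: "q ` I \<subseteq> V1"
  proof
    fix x assume "x \<in> q ` I"
    then obtain s where "s \<in> I" "x = q s" by auto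
    then show "x \<in> V1" using e(2)[of s] I01 \<delta> unfolding I_def dist_real_def by auto
  qed
  define \<Gamma> where "\<Gamma> = q ` I"
  have \<Gamma>V: "\<Gamma> \<subseteq> V" and \<Gamma>\<rho>: "\<psi> ` \<Gamma> \<subseteq> ball 0 \<rho>" using IV1 unfolding \<Gamma>_def V1_def by auto
  have \<Gamma>la: "\<Gamma> \<subseteq> la - X" unfolding \<Gamma>_def la using I01 qX by auto
  have aG: "a \<in> \<Gamma>" unfolding \<Gamma>_def I_def using s0 \<delta> by force
  have "I \<subseteq> {0..1}" using I01 by auto
  then have qcI: "continuous_on I q" using continuous_on_subset[OF qc] by blast
  have cG: "compact \<Gamma>" "connected \<Gamma>" unfolding \<Gamma>_def I_def
    using qcI unfolding I_def by (auto intro: compact_continuous_image connected_continuous_image)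
  define Rest where "Rest = q ` ({0..s0-\<delta>} \<union> {s0+\<delta>..1})"
  have "compact Rest" unfolding Rest_def
    using continuous_on_subset[OF qc] \<delta> by (intro compact_continuous_image) auto
  then have oV': "open (- Rest)" by (simp add: compact_imp_closed open_Compl)
  have aR: "a \<notin> Rest"
  proof
    assume "a \<in> Rest"
    then obtain s where s: "s \<in> {0..s0-\<delta>} \<union> {s0+\<delta>..1}" "q s = a" unfolding Rest_def by blast
    show False
    proof (cases "s = 0 \<or> s = 1")
      case True then show ?thesis using s q01 w a_def by auto
    next
      case False
      then have "s \<in> {0<..<1}" using s \<delta> by auto
      then have "s = s0" using qinj[of s] qinj[of s0] s s0 s0' by auto
      then show False using s \<delta> by auto
    qed
  qed
  have laV': "la \<inter> - Rest \<subseteq> \<Gamma>"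
  proof
    fix x assume "x \<in> la \<inter> - Rest"
    then obtain s where "s \<in> {0..1}" "x = q s" "x \<notin> Rest" unfolding la by auto
    then have "s \<in> I" unfolding Rest_def I_def by force
    then show "x \<in> \<Gamma>" using \<open>x = q s\<close> unfolding \<Gamma>_def by auto
  qed
  define T where "T = \<psi> ` \<Gamma>"
  have cT: "compact T" "connected T" unfolding T_def
    using continuous_on_subset[OF \<psi>c \<Gamma>V] cG
    by (auto intro: compact_continuous_image connected_continuous_image)
  have T0: "0 \<in> T" unfolding T_def using aG z a_def by force
  define P0 where "P0 = {z::complex. z ^ k \<in> T}"
  have cP0: "connected P0" unfolding P0_def using pow_preimage_connected[OF cT T0 k] .
  have P0r: "P0 \<subseteq> ball 0 r"
  proof
    fix z assume "z \<in> P0"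
    then have "norm (z ^ k) < \<rho>" using \<Gamma>\<rho> unfolding P0_def T_def by auto
    then have "norm z ^ k < (r/2) ^ k" unfolding \<rho>_def by (simp add: norm_power)
    then have "norm z < r/2" by (rule power_less_imp_less_base) (use r in simp)
    then show "z \<in> ball 0 r" using r by auto
  qed
  have \<phi>c': "continuous_on (ball 0 1) \<phi>'" and \<phi>inj: "\<And>x. x \<in> U \<Longrightarrow> \<phi>' (\<phi> x) = x"
    and \<phi>U: "\<phi> ` U = ball 0 1"
    using hU unfolding homeomorphism_def by auto
  have P0U0: "\<And>z. z \<in> P0 \<Longrightarrow> \<exists>x\<in>U0. z = \<phi> x \<and> \<phi>' z = x"
    using P0r r(2) \<phi>inj U0U by blast
  have P0b: "P0 \<subseteq> ball 0 1" using P0r r(2) \<phi>U U0U by blast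
  define P where "P = \<phi>' ` P0"
  have cP: "connected P" unfolding P_def
    using continuous_on_subset[OF \<phi>c' P0b] cP0 connected_continuous_image by blast
  have wP: "w \<in> P"
  proof -
    have "0 \<in> P0" unfolding P0_def using T0 k by (cases k) auto
    then show ?thesis unfolding P_def using \<phi>inj[of w] U z by force
  qed
  have PY: "P \<subseteq> S2 \<inter> f -` (la - X)"
  proof
    fix x assume "x \<in> P"
    then obtain z where zP: "z \<in> P0" "x = \<phi>' z" unfolding P_def by auto
    then obtain x0 where x0: "x0 \<in> U0" "z = \<phi> x0" "x = x0" using P0U0 by blast
    have "\<psi> (f x) = z ^ k" using eq x0 U0U by auto
    also have "\<dots> \<in> T" using zP unfolding P0_def by auto
    finally obtain \<gamma> where g1: "\<gamma> \<in> \<Gamma>" and g2: "\<psi> (f x) = \<psi> \<gamma>" unfolding T_def by auto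
    have fxV: "f x \<in> V" using x0 unfolding U0_def by auto
    have "\<gamma> \<in> V" using g1 \<Gamma>V by blast
    then have "\<psi>' (\<psi> \<gamma>) = \<gamma>" by (rule \<psi>inj)
    moreover have "\<psi>' (\<psi> (f x)) = f x" by (rule \<psi>inj[OF fxV])
    ultimately have "f x = \<gamma>" using g2 by metis
    then have "f x \<in> la - X" using g1 \<Gamma>la by blast
    moreover have "x \<in> S2" using x0 US U0U by blast
    ultimately show "x \<in> S2 \<inter> f -` (la - X)" by blast
  qed
  define N where "N = U0 \<inter> (S2 \<inter> f -` (- Rest))"
  have No: "openin (top_of_set S2) N" unfolding N_def
    using U0o continuous_openin_preimage_gen[OF fc oV'] by blast
  have wN: "w \<in> N" unfolding N_def using wU0 w aR a_def by auto
  have YN: "S2 \<inter> f -` (la - X) \<inter> N \<subseteq> P"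
  proof
    fix x assume x: "x \<in> S2 \<inter> f -` (la - X) \<inter> N"
    then have "f x \<in> \<Gamma>" using laV' unfolding N_def by auto
    then have "\<psi> (f x) \<in> T" unfolding T_def by auto
    moreover have xU: "x \<in> U" using x U0U unfolding N_def by auto
    ultimately have "\<phi> x \<in> P0" using eq unfolding P0_def by auto
    then show "x \<in> P" unfolding P_def using \<phi>inj[OF xU] by force
  qed
  show ?thesis using No wN cP wP PY YN by blast
qed

definition aisot :: "pt set \<Rightarrow> (real \<Rightarrow> pt) \<Rightarrow> (real \<Rightarrow> pt) \<Rightarrow> bool" where
  "aisot X p q \<longleftrightarrow> (\<exists>H :: real \<times> real \<Rightarrow> pt. continuous_on ({0..1} \<times> {0..1}) H \<and>
      (\<forall>t\<in>{0..1}. arc_param X (\<lambda>s. H (t, s))) \<and>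
      (\<forall>s\<in>{0..1}. H (0, s) = p s \<and> H (1, s) = q s))"

lemma arc_isotopic_iff:
  "arc_isotopic X A B \<longleftrightarrow> (\<exists>p q. aisot X p q \<and> A = p ` {0..1} \<and> B = q ` {0..1})"
proof
  assume "arc_isotopic X A B"
  then obtain H :: "real \<times> real \<Rightarrow> pt" where "continuous_on ({0..1} \<times> {0..1}) H"
      "\<forall>t\<in>{0..1}. arc_param X (\<lambda>s. H (t, s))"
      "A = (\<lambda>s. H (0, s)) ` {0..1}" "B = (\<lambda>s. H (1, s)) ` {0..1}"
    unfolding arc_isotopic_def by blast
  then show "\<exists>p q. aisot X p q \<and> A = p ` {0..1} \<and> B = q ` {0..1}"
    unfolding aisot_def by (intro exI[of _ "\<lambda>s. H (0, s)"] exI[of _ "\<lambda>s. H (1, s)"]) blast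
next
  assume "\<exists>p q. aisot X p q \<and> A = p ` {0..1} \<and> B = q ` {0..1}"
  then obtain p q and H :: "real \<times> real \<Rightarrow> pt" where H: "continuous_on ({0..1} \<times> {0..1}) H"
      "\<forall>t\<in>{0..1}. arc_param X (\<lambda>s. H (t, s))"
      "\<forall>s\<in>{0..1}. H (0, s) = p s \<and> H (1, s) = q s" and AB: "A = p ` {0..1}" "B = q ` {0..1}"
    unfolding aisot_def by blast
  have "A = (\<lambda>s. H (0, s)) ` {0..1}" "B = (\<lambda>s. H (1, s)) ` {0..1}"
    using H(3) AB by (auto intro!: image_cong)
  then show "arc_isotopic X A B" unfolding arc_isotopic_def using H(1,2) by blast
qed

lemma isot_sym: assumes "aisot X p q" shows "aisot X q p"
proof -
  obtain H :: "real \<times> real \<Rightarrow> pt" where H: "continuous_on ({0..1} \<times> {0..1}) H"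
      "\<forall>t\<in>{0..1}. arc_param X (\<lambda>s. H (t, s))"
      "\<forall>s\<in>{0..1}. H (0, s) = p s \<and> H (1, s) = q s"
    using assms unfolding aisot_def by blast
  define G where "G = (\<lambda>x::real\<times>real. H (1 - fst x, snd x))"
  have "continuous_on ({0..1} \<times> {0..1}) G" unfolding G_def
    by (rule continuous_on_compose2[OF H(1)]) (auto intro!: continuous_intros)
  moreover have "\<forall>t\<in>{0..1}. arc_param X (\<lambda>s. G (t, s))"
    using H(2) unfolding G_def by auto
  moreover have "\<forall>s\<in>{0..1}. G (0, s) = q s \<and> G (1, s) = p s"
    using H(3) unfolding G_def by auto
  ultimately show ?thesis unfolding aisot_def by blast
qed

lemma isot_trans: assumes "aisot X p q" "aisot X q r" shows "aisot X p r"
proof -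
  obtain H1 :: "real \<times> real \<Rightarrow> pt" where H1: "continuous_on ({0..1} \<times> {0..1}) H1"
      "\<forall>t\<in>{0..1}. arc_param X (\<lambda>s. H1 (t, s))"
      "\<forall>s\<in>{0..1}. H1 (0, s) = p s \<and> H1 (1, s) = q s"
    using assms(1) unfolding aisot_def by blast
  obtain H2 :: "real \<times> real \<Rightarrow> pt" where H2: "continuous_on ({0..1} \<times> {0..1}) H2"
      "\<forall>t\<in>{0..1}. arc_param X (\<lambda>s. H2 (t, s))"
      "\<forall>s\<in>{0..1}. H2 (0, s) = q s \<and> H2 (1, s) = r s"
    using assms(2) unfolding aisot_def by blast
  define G where "G = (\<lambda>x::real\<times>real. if fst x \<le> 1/2 then H1 (2 * fst x, snd x) else H2 (2 * fst x - 1, snd x))"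
  have "continuous_on ({0..1} \<times> {0..1}) G" unfolding G_def
  proof (rule continuous_on_cases_le)
    show "continuous_on {x \<in> {0..1} \<times> {0..1}. fst x \<le> 1 / 2} (\<lambda>x. H1 (2 * fst x, snd x))"
      by (rule continuous_on_compose2[OF H1(1)]) (auto intro!: continuous_intros)
    show "continuous_on {x \<in> {0..1} \<times> {0..1}. 1 / 2 \<le> fst x} (\<lambda>x. H2 (2 * fst x - 1, snd x))"
      by (rule continuous_on_compose2[OF H2(1)]) (auto intro!: continuous_intros)
    show "continuous_on ({0..1} \<times> {0..1}) fst" by (intro continuous_intros)
    fix x :: "real \<times> real" assume x: "x \<in> {0..1} \<times> {0..1}" "fst x = 1/2"
    then have "2 * fst x = 1" "2 * fst x - 1 = 0" "snd x \<in> {0..1}" by auto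
    then show "H1 (2 * fst x, snd x) = H2 (2 * fst x - 1, snd x)"
      using H1(3) H2(3) by simp
  qed
  moreover have "\<forall>t\<in>{0..1}. arc_param X (\<lambda>s. G (t, s))"
  proof
    fix t :: real assume t: "t \<in> {0..1}"
    show "arc_param X (\<lambda>s. G (t, s))"
    proof (cases "t \<le> 1/2")
      case True
      then have "(\<lambda>s. G (t, s)) = (\<lambda>s. H1 (2 * t, s))" unfolding G_def by auto
      then show ?thesis using H1(2) t True by auto
    next
      case False
      then have "(\<lambda>s. G (t, s)) = (\<lambda>s. H2 (2 * t - 1, s))" unfolding G_def by auto
      then show ?thesis using H2(2) t False by auto
    qed
  qed
  moreover have "\<forall>s\<in>{0..1}. G (0, s) = p s \<and> G (1, s) = r s"
    using H1(3) H2(3) unfolding G_def by auto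
  ultimately show ?thesis unfolding aisot_def by blast
qed

lemma arc_param_homeo:
  assumes p: "arc_param X p" and pA: "p ` {0..1} \<subseteq> A"
    and h: "homeomorphism A B \<phi> \<phi>'" and BS: "B \<subseteq> S2"
    and X: "\<forall>x\<in>A. \<phi> x \<in> X \<longleftrightarrow> x \<in> X"
  shows "arc_param X (\<lambda>s. \<phi> (p s))"
proof -
  have pc: "continuous_on {0..1} p" and p01: "p 0 \<in> X" "p 1 \<in> X"
    and pX: "p ` {0<..<1} \<inter> X = {}"
    using p unfolding arc_param_def by auto
  obtain p' where hp: "homeomorphism {0<..<1} (p ` {0<..<1}) p p'"
    using p unfolding arc_param_def by auto
  have \<phi>c: "continuous_on A \<phi>" and \<phi>A: "\<phi> ` A = B" using h unfolding homeomorphism_def by auto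
  have c: "continuous_on {0..1} (\<lambda>s. \<phi> (p s))" by (rule continuous_on_compose2[OF \<phi>c pc pA])
  have im: "(\<lambda>s. \<phi> (p s)) ` {0..1} \<subseteq> S2" using pA \<phi>A BS by auto
  have "p 0 \<in> A" "p 1 \<in> A" using pA by auto
  then have e: "\<phi> (p 0) \<in> X" "\<phi> (p 1) \<in> X" using X p01 by auto
  have sub: "p ` {0<..<1} \<subseteq> A" using pA by auto
  have h2: "homeomorphism (p ` {0<..<1}) (\<phi> ` p ` {0<..<1}) \<phi> \<phi>'"
    by (rule homeomorphism_of_subsets[OF h sub]) (use \<phi>A sub in auto)
  have "homeomorphism {0<..<1} (\<phi> ` p ` {0<..<1}) (\<phi> \<circ> p) (p' \<circ> \<phi>')"
    by (rule homeomorphism_compose[OF hp h2])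
  then have hh: "homeomorphism {0<..<1} ((\<lambda>s. \<phi> (p s)) ` {0<..<1}) (\<lambda>s. \<phi> (p s)) (p' \<circ> \<phi>')"
    by (simp add: o_def image_image)
  have "(\<lambda>s. \<phi> (p s)) ` {0<..<1} \<inter> X = {}"
  proof -
    { fix s :: real assume s: "s \<in> {0<..<1}" "\<phi> (p s) \<in> X"
      then have "p s \<in> A" using sub by auto
      then have "p s \<in> X" using X s by auto
      then have False using pX s(1) by blast }
    then show ?thesis by blast
  qed
  then show ?thesis unfolding arc_param_def using c im e hh by blast
qed

lemma isot_push:
  fixes h :: "real \<Rightarrow> pt \<Rightarrow> pt"
  assumes p: "arc_param X p" and pA: "p ` {0..1} \<subseteq> A"
    and hc: "continuous_on ({0..1} \<times> A) (\<lambda>(t, x). h t x)"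
    and hh: "\<forall>t\<in>{0..1}. h t ` A \<subseteq> S2 \<and> (\<exists>k. homeomorphism A (h t ` A) (h t) k)"
    and hX: "\<forall>t\<in>{0..1}. \<forall>x\<in>A. h t x \<in> X \<longleftrightarrow> x \<in> X"
    and h0: "\<forall>x\<in>A. h 0 x = x"
  shows "aisot X p (\<lambda>s. h 1 (p s))"
proof -
  have pc: "continuous_on {0..1} p" using p unfolding arc_param_def by auto
  define H where "H = (\<lambda>x::real\<times>real. h (fst x) (p (snd x)))"
  have "continuous_on ({0..1} \<times> {0..1}) (\<lambda>x::real\<times>real. (\<lambda>(t, x). h t x) (fst x, p (snd x)))"
  proof (rule continuous_on_compose2[OF hc])
    show "continuous_on ({0..1} \<times> {0..1}) (\<lambda>x::real\<times>real. (fst x, p (snd x)))"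
      by (intro continuous_intros continuous_on_compose2[OF pc]) auto
    show "(\<lambda>x::real\<times>real. (fst x, p (snd x))) ` ({0..1} \<times> {0..1}) \<subseteq> {0..1} \<times> A"
      using pA by auto
  qed
  then have "continuous_on ({0..1} \<times> {0..1}) H" unfolding H_def by simp
  moreover have "\<forall>t\<in>{0..1}. arc_param X (\<lambda>s. H (t, s))"
  proof
    fix t :: real assume t: "t \<in> {0..1}"
    obtain k where k: "homeomorphism A (h t ` A) (h t) k" using hh t by blast
    have "arc_param X (\<lambda>s. h t (p s))"
      by (rule arc_param_homeo[OF p pA k]) (use hh hX t in auto)
    then show "arc_param X (\<lambda>s. H (t, s))" unfolding H_def by simp
  qed
  moreover have "\<forall>s\<in>{0..1}. H (0, s) = p s \<and> H (1, s) = h 1 (p s)"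
    using h0 pA unfolding H_def by auto
  ultimately show ?thesis unfolding aisot_def by blast
qed

lemma interior_min_false:
  fixes \<sigma> :: "real \<Rightarrow> real"
  assumes c: "continuous_on {0..1} \<sigma>" and inj: "inj_on \<sigma> {0<..<1}"
    and s0: "0 < s0" "s0 < 1" and m: "\<forall>s\<in>{0..1}. \<sigma> s0 \<le> \<sigma> s"
  shows False
proof -
  define a where "a = s0 / 2"
  define b where "b = (1 + s0) / 2"
  have ab: "0 < a" "a < s0" "s0 < b" "b < 1" unfolding a_def b_def using s0 by auto
  have a01: "a \<in> {0..1}" "b \<in> {0..1}" using ab by auto
  have "\<sigma> a \<noteq> \<sigma> s0" using inj ab s0 unfolding inj_on_def by force
  moreover have "\<sigma> s0 \<le> \<sigma> a" using m a01 by blast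
  ultimately have sa: "\<sigma> s0 < \<sigma> a" by simp
  have "\<sigma> b \<noteq> \<sigma> s0" using inj ab s0 unfolding inj_on_def by force
  moreover have "\<sigma> s0 \<le> \<sigma> b" using m a01 by blast
  ultimately have sb: "\<sigma> s0 < \<sigma> b" by simp
  show False
  proof (cases "\<sigma> a \<le> \<sigma> b")
    case True
    have "continuous_on {s0..b} \<sigma>" using continuous_on_subset[OF c] ab by auto
    then obtain x where x: "s0 \<le> x" "x \<le> b" "\<sigma> x = \<sigma> a"
      using IVT'[of \<sigma> s0 "\<sigma> a" b] sa True ab by auto
    then have "x = a" using inj ab s0 unfolding inj_on_def by force
    then show False using x ab by auto
  next
    case False
    have "continuous_on {a..s0} \<sigma>" using continuous_on_subset[OF c] ab by auto
    then obtain x where x: "a \<le> x" "x \<le> s0" "\<sigma> x = \<sigma> b"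
      using IVT2'[of \<sigma> s0 "\<sigma> b" a] sb False ab by auto
    then have "x = b" using inj ab s0 unfolding inj_on_def by force
    then show False using x ab by auto
  qed
qed

lemma endpoints_preimage:
  assumes "blowing_up_conditions f X j" and e: "e \<in> {0::real, 1}"
  shows "j e \<in> S2 \<inter> f -` X"
proof -
  have jc: "continuous_on {0..1} j" and ji: "inj_on j {0..1}" and jS: "j ` {0..1} \<subseteq> S2"
    using assms unfolding blowing_up_conditions_def by auto
  obtain L as where as: "\<forall>i<(L::nat). arc_in (S2 \<inter> f -` X) (as i)" "j ` {0..1} = (\<Union>i<L. as i)"
    using assms unfolding blowing_up_conditions_def by blast
  have "j e \<in> j ` {0..1}" using e by auto
  then obtain i where i: "i < L" "j e \<in> as i" using as(2) by auto
  obtain q where q: "arc_param (S2 \<inter> f -` X) q" "as i = q ` {0..1}" using as(1) i unfolding arc_in_def by blast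
  obtain s0 where s0: "s0 \<in> {0..1}" "q s0 = j e" using i q by auto
  show ?thesis
  proof (cases "s0 = 0 \<or> s0 = 1")
    case True then show ?thesis using q s0 unfolding arc_param_def by auto
  next
    case False
    then have s0': "0 < s0" "s0 < 1" using s0 by auto
    obtain j' where hj: "homeomorphism {0..1} (j ` {0..1}) j j'"
      using homeomorphism_compact[OF compact_Icc jc refl ji] by blast
    have qc: "continuous_on {0..1} q" using q unfolding arc_param_def by auto
    have qsub: "q ` {0..1} \<subseteq> j ` {0..1}" using q(2) as(2) i by auto
    obtain q' where hq: "homeomorphism {0<..<1} (q ` {0<..<1}) q q'"
      using q unfolding arc_param_def by auto
    have j'c: "continuous_on (j ` {0..1}) j'" and j'inv: "\<And>y. y \<in> j ` {0..1} \<Longrightarrow> j (j' y) = y"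
      and j'j: "\<And>x. x \<in> {0..1} \<Longrightarrow> j' (j x) = x" and j'im: "j' ` (j ` {0..1}) = {0..1}"
      using hj unfolding homeomorphism_def by auto
    define \<sigma> where "\<sigma> = (\<lambda>s. j' (q s))"
    have sc: "continuous_on {0..1} \<sigma>" unfolding \<sigma>_def by (rule continuous_on_compose2[OF j'c qc qsub])
    have sinj: "inj_on \<sigma> {0<..<1}"
    proof (rule inj_onI)
      fix x y assume xy: "x \<in> {0<..<1}" "y \<in> {0<..<1}" "\<sigma> x = \<sigma> y"
      have "q x \<in> j ` {0..1}" "q y \<in> j ` {0..1}" using qsub xy by auto
      then have "q x = q y" using j'inv xy(3) unfolding \<sigma>_def by metis
      then show "x = y" using hq xy unfolding homeomorphism_def by metis
    qed
    have sv: "\<sigma> s0 = e" unfolding \<sigma>_def using s0 j'j e by auto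
    have srange: "\<sigma> s \<in> {0..1}" if "s \<in> {0..1}" for s
    proof -
      have "q s \<in> j ` {0..1}" using qsub that by auto
      then have "j' (q s) \<in> j' ` j ` {0..1}" by blast
      then show ?thesis unfolding \<sigma>_def using j'im by simp
    qed
    show ?thesis
    proof (cases "e = 0")
      case True
      have "\<forall>s\<in>{0..1}. \<sigma> s0 \<le> \<sigma> s" using srange sv True by auto
      then show ?thesis using interior_min_false[OF sc sinj s0'] by blast
    next
      case False
      then have e1: "e = 1" using e by auto
      have sc2: "continuous_on {0..1} (\<lambda>s. - \<sigma> s)" using sc by (intro continuous_intros)
      have "inj_on (\<lambda>s. - \<sigma> s) {0<..<1}" using sinj unfolding inj_on_def by auto
      moreover have "\<forall>s\<in>{0..1}. - \<sigma> s0 \<le> - \<sigma> s" using srange sv e1 by auto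
      ultimately show ?thesis using interior_min_false[OF sc2 _ s0'] by blast
    qed
  qed
qed

lemma arc_paramD:
  assumes "arc_param Y j"
  shows "continuous_on {0..1} j" "j ` {0..1} \<subseteq> S2" "j 0 \<in> Y" "j 1 \<in> Y"
    "\<exists>j'. homeomorphism {0<..<1} (j ` {0<..<1}) j j'" "j ` {0<..<1} \<inter> Y = {}"
  using assms by (simp_all add: arc_param_def)

lemma arc_paramI:
  assumes "continuous_on {0..1} j" "j ` {0..1} \<subseteq> S2" "j 0 \<in> Y" "j 1 \<in> Y"
    "\<exists>j'. homeomorphism {0<..<1} (j ` {0<..<1}) j j'" "j ` {0<..<1} \<inter> Y = {}"
  shows "arc_param Y j"
  using assms by (simp add: arc_param_def)

lemma arc_param_cong:
  assumes "arc_param X p" "\<forall>s\<in>{0..1}. p s = q s"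
  shows "arc_param X q"
proof (rule arc_paramI)
  note P = arc_paramD[OF assms(1)]
  have eq1: "q ` {0..1} = p ` {0..1}"
    by (rule image_cong) (use assms(2) in auto)
  have eq2: "q ` {0<..<1} = p ` {0<..<1}"
    by (rule image_cong) (use assms(2) in auto)
  have "continuous_on {0..1} p = continuous_on {0..1} q"
    by (rule continuous_on_cong) (use assms(2) in auto)
  with P(1) show "continuous_on {0..1} q" by simp
  have "q 0 = p 0" "q 1 = p 1" using assms(2) by auto
  then show "q 0 \<in> X" "q 1 \<in> X" using P(3,4) by simp_all
  from P(5) obtain p' where hp: "homeomorphism {0<..<1} (p ` {0<..<1}) p p'" ..
  have "homeomorphism {0<..<1} (q ` {0<..<1}) q p'"
  proof (rule homeomorphism_cong[OF hp])
    show "{0<..<1} = {0<..<1::real}" ..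
    show "q ` {0<..<1} = p ` {0<..<1}" by (rule eq2)
    show "\<And>x. x \<in> {0<..<1} \<Longrightarrow> q x = p x" using assms(2) by auto
    show "\<And>y. y \<in> p ` {0<..<1} \<Longrightarrow> p' y = p' y" by simp
  qed
  then show "\<exists>j'. homeomorphism {0<..<1} (q ` {0<..<1}) q j'" by blast
  show "q ` {0..1} \<subseteq> S2" using P(2) eq1 by simp
  show "q ` {0<..<1} \<inter> X = {}" using P(6) eq2 by simp
qed

lemma aisot_cong2:
  assumes "aisot X p q" "\<forall>s\<in>{0..1}. q s = q' s" shows "aisot X p q'"
proof -
  obtain H :: "real \<times> real \<Rightarrow> pt" where H: "continuous_on ({0..1} \<times> {0..1}) H"
      "\<forall>t\<in>{0..1}. arc_param X (\<lambda>s. H (t, s))"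
      "\<forall>s\<in>{0..1}. H (0, s) = p s \<and> H (1, s) = q s"
    using assms(1) unfolding aisot_def by blast
  have "\<forall>s\<in>{0..1}. H (0, s) = p s \<and> H (1, s) = q' s" using H(3) assms(2) by simp
  then show ?thesis unfolding aisot_def using H(1,2) by blast
qed

lemma aisot_params:
  assumes "aisot X p q" shows "arc_param X p" "arc_param X q"
proof -
  obtain H :: "real \<times> real \<Rightarrow> pt" where H: "\<forall>t\<in>{0..1}. arc_param X (\<lambda>s. H (t, s))"
      "\<forall>s\<in>{0..1}. H (0, s) = p s \<and> H (1, s) = q s"
    using assms unfolding aisot_def by blast
  show "arc_param X p" using arc_param_cong[of X "\<lambda>s. H (0, s)" p] H by auto
  show "arc_param X q" using arc_param_cong[of X "\<lambda>s. H (1, s)" q] H by auto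
qed

lemma arc_isotopic_sym: "arc_isotopic X A B \<Longrightarrow> arc_isotopic X B A"
  unfolding arc_isotopic_iff using isot_sym by blast

lemma lift_transport:
  fixes h1 kk g f :: "pt \<Rightarrow> pt"
  assumes fc: "continuous_on S2 f" and fS: "f ` S2 \<subseteq> S2"
    and lf: "\<forall>p\<in>S2. \<exists>k\<ge>1. local_form f p k"
    and q: "arc_param X q" and la: "la = q ` {0..1}"
    and hk: "homeomorphism A0 R h1 kk" and A0S: "A0 \<subseteq> S2" and RS: "R \<subseteq> S2"
    and gh: "\<forall>w\<in>A0. g (h1 w) = f w"
    and Dc: "closed D" and RD: "S2 - D \<subseteq> R" and DR: "R \<inter> D \<subseteq> E"
    and ee: "\<forall>e\<in>E. e \<in> A0 \<and> h1 e = e \<and> f e \<in> X"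
    and x: "x \<in> S2 \<inter> f -` (la - X)"
    and mu: "\<mu> = closure (connected_component_set (S2 \<inter> f -` (la - X)) x)" and muA: "\<mu> \<subseteq> A0"
  shows "lift_of g X la (h1 ` \<mu>)"
proof -
  define Y where "Y = S2 \<inter> f -` (la - X)"
  define Z where "Z = S2 \<inter> g -` (la - X)"
  define C where "C = connected_component_set Y x"
  have h1c: "continuous_on A0 h1" and h1A: "h1 ` A0 = R" and kkh: "\<And>w. w \<in> A0 \<Longrightarrow> kk (h1 w) = w"
    and kkc: "continuous_on R kk" and kkR: "kk ` R = A0" and hkk: "\<And>z. z \<in> R \<Longrightarrow> h1 (kk z) = z"
    using hk unfolding homeomorphism_def by auto
  have xC: "x \<in> C" unfolding C_def using x Y_def by simp
  have CY: "C \<subseteq> Y" unfolding C_def by (rule connected_component_subset)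
  have muC: "\<mu> = closure C" unfolding mu C_def Y_def ..
  have CA: "C \<subseteq> A0" using muC muA closure_subset by blast
  have hY: "h1 w \<in> Z" if "w \<in> Y" "w \<in> A0" for w
  proof -
    have "g (h1 w) = f w" using gh that by auto
    moreover have "h1 w \<in> S2" using h1A RS that by auto
    ultimately show ?thesis using that unfolding Y_def Z_def by auto
  qed
  have hZ: "w \<in> Y" if "h1 w \<in> Z" "w \<in> A0" for w
  proof -
    have "g (h1 w) = f w" using gh that by auto
    then show ?thesis using that A0S unfolding Y_def Z_def by auto
  qed
  have bS2: "bounded S2" unfolding S2_def by simp
  have cmu: "compact \<mu>" unfolding muC
  proof -
    have "C \<subseteq> S2" using CY unfolding Y_def by blast
    then have "bounded C" using bS2 bounded_subset by blast
    then show "compact (closure C)" by (simp add: compact_closure)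
  qed
  have cimu: "compact (h1 ` \<mu>)"
    using compact_continuous_image[OF continuous_on_subset[OF h1c muA] cmu] .
  then have climu: "closed (h1 ` \<mu>)" by (rule compact_imp_closed)
  have CYcl: "Y \<inter> \<mu> \<subseteq> C"
  proof -
    have "closedin (top_of_set Y) C" unfolding C_def by (rule closedin_connected_component)
    then obtain T where T: "closed T" "C = Y \<inter> T" unfolding closedin_closed by blast
    then have "\<mu> \<subseteq> T" unfolding muC by (simp add: closure_minimal)
    then show ?thesis using T by blast
  qed
  define K where "K = connected_component_set Z (h1 x)"
  have xA: "x \<in> A0" using xC CA by blast
  have hxZ: "h1 x \<in> Z" using hY[OF _ xA] xC CY by blast
  have hCK: "h1 ` C \<subseteq> K"
  proof -
    have "connected C" unfolding C_def by simp
    then have "connected (h1 ` C)" using continuous_on_subset[OF h1c CA] connected_continuous_image by blast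
    moreover have "h1 ` C \<subseteq> Z" using hY CY CA by blast
    ultimately show ?thesis unfolding K_def using xC by (intro connected_component_maximal) auto
  qed
  have KZ: "K \<subseteq> Z" unfolding K_def by (rule connected_component_subset)
  have "K \<subseteq> h1 ` C"
  proof -
    define E' where "E' = K \<inter> h1 ` C"
    have "E' = K \<inter> h1 ` \<mu>"
    proof
      have "C \<subseteq> \<mu>" unfolding muC by (rule closure_subset)
      then show "E' \<subseteq> K \<inter> h1 ` \<mu>" unfolding E'_def by blast
      show "K \<inter> h1 ` \<mu> \<subseteq> E'"
      proof
        fix z assume z: "z \<in> K \<inter> h1 ` \<mu>"
        then obtain w where w: "w \<in> \<mu>" "z = h1 w" by blast
        have "z \<in> Z" using z KZ by blast
        then have "h1 w \<in> Z" using w(2) by simp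
        moreover have "w \<in> A0" using w muA by blast
        ultimately have "w \<in> Y" by (rule hZ)
        then have "w \<in> C" using CYcl w by blast
        then show "z \<in> E'" unfolding E'_def using z w by blast
      qed
    qed
    then have cl: "closedin (top_of_set K) E'" using closedin_closed_Int[OF climu, of K] by simp
    have op: "openin (top_of_set K) E'"
      unfolding openin_subopen[of _ E']
    proof
      fix z assume zE: "z \<in> E'"
      then obtain w where w: "w \<in> C" "z = h1 w" unfolding E'_def by blast
      have wY: "w \<in> Y" using w CY by blast
      have wA: "w \<in> A0" using w CA by blast
      obtain k where k: "k \<ge> 1" "local_form f w k" using lf wY unfolding Y_def by blast
      obtain N P where N: "openin (top_of_set S2) N" "w \<in> N" and P: "connected P" "w \<in> P" "P \<subseteq> Y" "Y \<inter> N \<subseteq> P"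
        using local_lift_open[OF fc fS k(2) k(1) q la] wY unfolding Y_def by blast
      have "connected_component_set Y w = C" unfolding C_def
        using w(1) unfolding C_def by (rule connected_component_eq)
      then have PC: "P \<subseteq> C" using connected_component_maximal[OF P(2) P(1) P(3)] by simp
      obtain G where G: "open G" "N = S2 \<inter> G" using N(1) unfolding openin_open by blast
      have "openin (top_of_set R) (R \<inter> kk -` G)" by (rule continuous_openin_preimage_gen[OF kkc G(1)])
      then obtain G' where G': "open G'" "R \<inter> kk -` G = R \<inter> G'" unfolding openin_open by blast
      define Op where "Op = G' \<inter> - D"
      have oO: "open Op" unfolding Op_def using G'(1) Dc by (simp add: open_Int open_Compl)
      have zR: "z \<in> R" using w wA h1A by blast
      have zD: "z \<notin> D"
      proof
        assume "z \<in> D"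
        then have "z \<in> E" using zR DR by blast
        then have "z \<in> A0" "h1 z = z" "f z \<in> X" using ee by auto
        have "w = kk z" using kkh[OF wA] w(2) by simp
        also have "kk z = z" using kkh[of z] \<open>z \<in> A0\<close> \<open>h1 z = z\<close> by simp
        finally have "w = z" .
        then show False using \<open>f z \<in> X\<close> wY unfolding Y_def by auto
      qed
      have "kk z \<in> G" using kkh[OF wA] w(2) N G by auto
      then have "z \<in> G'" using zR G'(2) by blast
      then have zO: "z \<in> Op" unfolding Op_def using zD by blast
      have "K \<inter> Op \<subseteq> E'"
      proof
        fix z' assume z': "z' \<in> K \<inter> Op"
        then have z'Z: "z' \<in> Z" using KZ by blast
        then have z'S: "z' \<in> S2" unfolding Z_def by blast
        have z'R: "z' \<in> R" using z' z'S RD unfolding Op_def by blast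
        then have "z' \<in> R \<inter> kk -` G" using z' G'(2) unfolding Op_def by blast
        then have kG: "kk z' \<in> G" by blast
        define w' where "w' = kk z'"
        have w'A: "w' \<in> A0" unfolding w'_def using kkR z'R by blast
        have hw': "h1 w' = z'" unfolding w'_def using hkk z'R by blast
        have w'Y: "w' \<in> Y" using hZ[OF _ w'A] hw' z'Z by simp
        have "w' \<in> N" using G w'A A0S kG unfolding w'_def by blast
        then have "w' \<in> C" using P(4) PC w'Y by blast
        then show "z' \<in> E'" unfolding E'_def using z' hw' by blast
      qed
      moreover have "openin (top_of_set K) (K \<inter> Op)" using oO by (rule openin_open_Int)
      moreover have "z \<in> K \<inter> Op" using zE zO unfolding E'_def by blast
      ultimately show "\<exists>T. openin (top_of_set K) T \<and> z \<in> T \<and> T \<subseteq> E'" by blast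
    qed
    have ne: "E' \<noteq> {}" unfolding E'_def using hCK xC by blast
    have "connected K" unfolding K_def by simp
    then have "E' = K" using cl op ne unfolding connected_clopen by blast
    then show ?thesis unfolding E'_def by blast
  qed
  then have KC: "K = h1 ` C" using hCK by blast
  have "closure (h1 ` C) = h1 ` \<mu>"
  proof
    have "C \<subseteq> \<mu>" unfolding muC by (rule closure_subset)
    then have "h1 ` C \<subseteq> h1 ` \<mu>" by (rule image_mono)
    then show "closure (h1 ` C) \<subseteq> h1 ` \<mu>" using climu by (rule closure_minimal)
    show "h1 ` \<mu> \<subseteq> closure (h1 ` C)" unfolding muC
    proof (rule image_closure_subset)
      show "continuous_on (closure C) h1" using continuous_on_subset[OF h1c] muA muC by simp
      show "closed (closure (h1 ` C))" by simp
      show "h1 ` C \<subseteq> closure (h1 ` C)" by (rule closure_subset)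
    qed
  qed
  then have eq: "h1 ` \<mu> = closure (connected_component_set Z (h1 x))" using KC K_def by simp
  show ?thesis unfolding lift_of_def
  proof (rule bexI[of _ "h1 x"])
    show "h1 ` \<mu> = closure (connected_component_set (S2 \<inter> g -` (la - X)) (h1 x))"
      using eq unfolding Z_def .
    show "h1 x \<in> S2 \<inter> g -` (la - X)" using hxZ unfolding Z_def .
  qed
qed

lemma image_inv_id:
  assumes "\<And>x. x \<in> S \<Longrightarrow> k (h x) = x"
  shows "k ` h ` S = S"
proof -
  have "(\<lambda>x. k (h x)) ` S = (\<lambda>x. x) ` S" by (rule image_cong) (use assms in auto)
  then show ?thesis by (simp add: image_image)
qed

theorem mainTheorem6:
  fixes f g :: "pt \<Rightarrow> pt" and X :: "pt set" and j :: "real \<Rightarrow> pt"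
    and n :: nat and \<Lambda> :: "pt set set"
  assumes "marked_bc f X"
    and "blowing_up_conditions f X j"
    and "n \<ge> 1"
    and "blown_up f X j n g"
    and "arc_system X \<Lambda>"
    and "forward_invariant f X \<Lambda>"
    and "\<exists>\<Lambda>0 \<subseteq> \<Lambda>. \<exists>L. lift_system f X \<Lambda>0 L \<and> sys_isotopic X L \<Lambda> \<and>
           (\<Union>L) \<inter> j ` {0<..<1} = {}"
  shows "forward_invariant g X \<Lambda>"
proof -
  have fc: "continuous_on S2 f" and fS: "f ` S2 \<subseteq> S2" and lf: "\<forall>p\<in>S2. \<exists>k\<ge>1. local_form f p k"
    and XS: "X \<subseteq> S2" and fX: "f ` X \<subseteq> X"
    using assms(1) by (simp_all add: marked_bc_def branched_covering_def)
  have jc: "continuous_on {0..1} j" and ji: "inj_on j {0..1}" and jS: "j ` {0..1} \<subseteq> S2"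
    and IaXc: "j ` {0<..<1} \<inter> (X \<union> crit f) = {}"
    using assms(2) by (simp_all add: blowing_up_conditions_def)
  have IaX: "j ` {0<..<1} \<inter> X = {}" using IaXc by blast
  let ?Ia = "j ` {0<..<1}"
  let ?A0 = "S2 - j ` {0<..<1}"
  obtain W D pd pd' h c where
    B1: "j ` {0<..<1} \<subseteq> W" and
    B2: "{j 0, j 1} \<subseteq> closure W - W" and
    B3: "closure W \<inter> (S2 \<inter> f -` X) = j ` {0..1} \<inter> (S2 \<inter> f -` X)" and
    B4: "homeomorphism (cball (0::complex) 1) D pd pd'" and
    B5: "D \<subseteq> W \<union> {j 0, j 1}" and
    B6: "{j 0, j 1} \<subseteq> pd ` sphere 0 1" and
    B7: "continuous_on ({0..1::real} \<times> (S2 - j ` {0<..<1})) (\<lambda>(t, x). h t x)" and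
    B8: "\<forall>t\<in>{0..1}. h t ` (S2 - j ` {0<..<1}) \<subseteq> S2 \<and>
          (\<exists>k. homeomorphism (S2 - j ` {0<..<1}) (h t ` (S2 - j ` {0<..<1})) (h t) k)" and
    B9: "\<forall>x\<in>S2 - j ` {0<..<1}. h 0 x = x" and
    B10: "\<forall>t\<in>{0..1}. \<forall>x\<in>S2 - j ` {0<..<1} - W. h t x = x" and
    B11: "h 1 ` (S2 - j ` {0<..<1}) = S2 - (D - {j 0, j 1})" and
    B12: "\<forall>x\<in>S2 - (D - {j 0, j 1}). c x = inv_into (S2 - j ` {0<..<1}) (h 1) x" and
    B13: "\<forall>x\<in>S2 - pd ` ball 0 1. g x = f (c x)"
    using assms(4) unfolding blown_up_def Let_def by (elim exE conjE) (rule that; assumption)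
  let ?R = "S2 - (D - {j 0, j 1})"
  have e0: "j 0 \<in> S2 \<inter> f -` X" using endpoints_preimage[OF assms(2), of 0] by simp
  have e1: "j 1 \<in> S2 \<inter> f -` X" using endpoints_preimage[OF assms(2), of 1] by simp
  have eIa: "j 0 \<notin> ?Ia" "j 1 \<notin> ?Ia"
  proof -
    show "j 0 \<notin> ?Ia"
    proof
      assume "j 0 \<in> ?Ia"
      then obtain s where s: "s \<in> {0<..<1}" "j 0 = j s" by blast
      then have "0 = s" using inj_onD[OF ji s(2)] by auto
      then show False using s by simp
    qed
    show "j 1 \<notin> ?Ia"
    proof
      assume "j 1 \<in> ?Ia"
      then obtain s where s: "s \<in> {0<..<1}" "j 1 = j s" by blast
      then have "1 = s" using inj_onD[OF ji s(2)] by auto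
      then show False using s by simp
    qed
  qed
  have XW: "X \<inter> W = {}"
  proof (rule ccontr)
    assume "X \<inter> W \<noteq> {}"
    then obtain x where x: "x \<in> X" "x \<in> W" by blast
    have "x \<in> closure W" using x(2) closure_subset by blast
    moreover have "x \<in> S2 \<inter> f -` X" using x(1) XS fX by blast
    ultimately have "x \<in> j ` {0..1}" using B3 by blast
    then obtain s where s: "s \<in> {0..1}" "x = j s" by blast
    show False
    proof (cases "s = 0 \<or> s = 1")
      case True
      then have "x \<in> {j 0, j 1}" using s by auto
      then show False using B2 x(2) by blast
    next
      case False
      then have "x \<in> ?Ia" using s by auto
      then show False using IaX x(1) by blast
    qed
  qed
  have XA: "\<And>x. x \<in> X \<Longrightarrow> x \<in> S2 - j ` {0<..<1} - W" using XW XS IaX by blast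
  have hfixX: "\<And>t x. t \<in> {0..1} \<Longrightarrow> x \<in> X \<Longrightarrow> h t x = x" using B10 XA by blast
  have eA: "j 0 \<in> ?A0" "j 1 \<in> ?A0" using e0 e1 eIa by auto
  have hfixe: "h 1 (j 0) = j 0" "h 1 (j 1) = j 1" using B10 eA B2 by auto
  have hX: "\<forall>t\<in>{0..1}. \<forall>x\<in>?A0. h t x \<in> X \<longleftrightarrow> x \<in> X"
  proof (intro ballI iffI)
    fix t x assume t: "t \<in> {0..(1::real)}" and x: "x \<in> ?A0"
    show "x \<in> X \<Longrightarrow> h t x \<in> X" using hfixX t by simp
    assume hx: "h t x \<in> X"
    obtain k where k: "homeomorphism ?A0 (h t ` ?A0) (h t) k" using B8 t by blast
    have kk: "\<And>y. y \<in> ?A0 \<Longrightarrow> k (h t y) = y" using k unfolding homeomorphism_def by blast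
    have "h t (h t x) = h t x" using hfixX[OF t hx] .
    then have "k (h t (h t x)) = k (h t x)" by simp
    moreover have "h t x \<in> ?A0" using XA hx by blast
    ultimately have "h t x = x" using kk[OF x] kk[of "h t x"] by simp
    then show "x \<in> X" using hx by simp
  qed
  obtain kk where hk: "homeomorphism ?A0 ?R (h 1) kk"
    using B8 B11 by (metis atLeastAtMost_iff order_refl zero_le_one)
  have h1c: "continuous_on ?A0 (h 1)" and kkh: "\<And>w. w \<in> ?A0 \<Longrightarrow> kk (h 1 w) = w"
    and hkk: "\<And>z. z \<in> ?R \<Longrightarrow> h 1 (kk z) = z" and kkR: "kk ` ?R = ?A0"
    using hk unfolding homeomorphism_def by auto
  have pdc: "continuous_on (cball 0 1) pd" and pdD: "pd ` cball 0 1 = D"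
    and pdinj: "\<And>z. z \<in> cball 0 1 \<Longrightarrow> pd' (pd z) = z"
    using B4 unfolding homeomorphism_def by auto
  have pdball: "pd ` ball 0 1 \<subseteq> D - {j 0, j 1}"
  proof
    fix y assume "y \<in> pd ` ball 0 1"
    then obtain z where z: "z \<in> ball 0 1" "y = pd z" by blast
    have "y \<in> D" using z pdD by auto
    moreover have "y \<notin> {j 0, j 1}"
    proof
      assume "y \<in> {j 0, j 1}"
      then obtain z' where z': "z' \<in> sphere 0 1" "y = pd z'" using B6 by blast
      have "z = z'" using pdinj[of z] pdinj[of z'] z z' by auto
      then show False using z z' by auto
    qed
    ultimately show "y \<in> D - {j 0, j 1}" by blast
  qed
  have injh1: "inj_on (h 1) ?A0" using kkh by (rule inj_on_inverseI)
  have gh: "\<forall>w\<in>?A0. g (h 1 w) = f w"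
  proof
    fix w assume w: "w \<in> ?A0"
    have hR: "h 1 w \<in> ?R" using B11 w by blast
    then have "h 1 w \<in> S2 - pd ` ball 0 1" using pdball by blast
    then have "g (h 1 w) = f (c (h 1 w))" using B13 by blast
    also have "c (h 1 w) = inv_into ?A0 (h 1) (h 1 w)" using B12 hR by blast
    also have "\<dots> = w" using inv_into_f_f[OF injh1 w] .
    finally show "g (h 1 w) = f w" .
  qed
  have Dc: "closed D"
    using compact_continuous_image[OF pdc compact_cball] pdD compact_imp_closed by metis
  have A0S: "?A0 \<subseteq> S2" and RS: "?R \<subseteq> S2" and RD: "S2 - D \<subseteq> ?R" and DR: "?R \<inter> D \<subseteq> {j 0, j 1}"
    by auto
  have ee: "\<forall>e\<in>{j 0, j 1}. e \<in> ?A0 \<and> h 1 e = e \<and> f e \<in> X"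
    using eA hfixe e0 e1 by auto
  have kkX: "\<forall>y\<in>?R. kk y \<in> X \<longleftrightarrow> y \<in> X"
  proof
    fix y assume y: "y \<in> ?R"
    have "kk y \<in> ?A0" using kkR y by blast
    then have "h 1 (kk y) \<in> X \<longleftrightarrow> kk y \<in> X" using hX by simp
    then show "kk y \<in> X \<longleftrightarrow> y \<in> X" using hkk[OF y] by simp
  qed
  have hX1: "\<forall>x\<in>?A0. h 1 x \<in> X \<longleftrightarrow> x \<in> X" using hX by simp
  have push: "aisot X p (\<lambda>s. h 1 (p s))" if "arc_param X p" "p ` {0..1} \<subseteq> ?A0" for p
    by (rule isot_push[OF that B7 B8 hX B9])
  obtain \<Lambda>0 L where L0: "\<Lambda>0 \<subseteq> \<Lambda>" and LS: "lift_system f X \<Lambda>0 L" and SI: "sys_isotopic X L \<Lambda>"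
    and UL: "(\<Union>L) \<inter> j ` {0<..<1} = {}"
    using assms(7) by blast
  have LA: "arc_system X L" and Llift: "\<forall>\<mu>\<in>L. \<exists>la\<in>\<Lambda>0. lift_of f X la \<mu>"
    using LS unfolding lift_system_def by auto
  have muA: "\<mu> \<subseteq> ?A0" if "\<mu> \<in> L" for \<mu>
  proof -
    have "arc_in X \<mu>" using LA that unfolding arc_system_def by blast
    then obtain p where "arc_param X p" "\<mu> = p ` {0..1}" unfolding arc_in_def by blast
    then have "\<mu> \<subseteq> S2" using arc_paramD(2) by blast
    moreover have "\<mu> \<inter> ?Ia = {}" using UL that by blast
    ultimately show ?thesis by blast
  qed
  have K1: "arc_isotopic X \<mu> \<rho> \<longleftrightarrow> arc_isotopic X (h 1 ` \<mu>) \<rho>" if mu: "\<mu> \<in> L" for \<mu> \<rho>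
  proof
    assume "arc_isotopic X \<mu> \<rho>"
    then obtain p r where pr: "aisot X p r" "\<mu> = p ` {0..1}" "\<rho> = r ` {0..1}"
      unfolding arc_isotopic_iff by blast
    have pa: "arc_param X p" using aisot_params(1)[OF pr(1)] .
    have "aisot X p (\<lambda>s. h 1 (p s))" using push[OF pa] muA[OF mu] pr(2) by blast
    then have "aisot X (\<lambda>s. h 1 (p s)) r" using isot_sym isot_trans pr(1) by blast
    moreover have "(\<lambda>s. h 1 (p s)) ` {0..1} = h 1 ` \<mu>" using pr(2) by (simp add: image_image)
    ultimately show "arc_isotopic X (h 1 ` \<mu>) \<rho>" unfolding arc_isotopic_iff using pr(3) by blast
  next
    assume "arc_isotopic X (h 1 ` \<mu>) \<rho>"
    then obtain q r where qr: "aisot X q r" "h 1 ` \<mu> = q ` {0..1}" "\<rho> = r ` {0..1}"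
      unfolding arc_isotopic_iff by blast
    have qa: "arc_param X q" using aisot_params(1)[OF qr(1)] .
    have qR: "q ` {0..1} \<subseteq> ?R" using qr(2) muA[OF mu] B11 by blast
    have hkk': "homeomorphism ?R ?A0 kk (h 1)" using hk by (rule homeomorphism_symD)
    have pa: "arc_param X (\<lambda>s. kk (q s))" by (rule arc_param_homeo[OF qa qR hkk' A0S kkX])
    have "(\<lambda>s. kk (q s)) ` {0..1} = kk ` h 1 ` \<mu>" using qr(2) by (simp add: image_image)
    also have "\<dots> = \<mu>" by (rule image_inv_id) (use kkh muA[OF mu] in blast)
    finally have pim: "(\<lambda>s. kk (q s)) ` {0..1} = \<mu>" .
    have "aisot X (\<lambda>s. kk (q s)) (\<lambda>s. h 1 (kk (q s)))" using push[OF pa] pim muA[OF mu] by blast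
    moreover have "\<forall>s\<in>{0..1}. h 1 (kk (q s)) = q s" using hkk qR by blast
    ultimately have "aisot X (\<lambda>s. kk (q s)) q" by (rule aisot_cong2)
    then have "aisot X (\<lambda>s. kk (q s)) r" using qr(1) by (rule isot_trans)
    then show "arc_isotopic X \<mu> \<rho>" unfolding arc_isotopic_iff using pim qr(3) by blast
  qed
  have K1': "arc_isotopic X \<rho> \<mu> \<longleftrightarrow> arc_isotopic X \<rho> (h 1 ` \<mu>)" if mu: "\<mu> \<in> L" for \<mu> \<rho>
    using K1[OF mu, of \<rho>] arc_isotopic_sym by blast
  have injL: "\<mu>1 = \<mu>2" if "\<mu>1 \<in> L" "\<mu>2 \<in> L" "h 1 ` \<mu>1 = h 1 ` \<mu>2" for \<mu>1 \<mu>2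
  proof -
    have "kk ` h 1 ` \<mu>1 = \<mu>1" by (rule image_inv_id) (use kkh muA[OF that(1)] in blast)
    then have "\<mu>1 = kk ` h 1 ` \<mu>1" by simp
    also have "\<dots> = kk ` h 1 ` \<mu>2" using that(3) by simp
    also have "\<dots> = \<mu>2" by (rule image_inv_id) (use kkh muA[OF that(2)] in blast)
    finally show ?thesis .
  qed
  define L' where "L' = (\<lambda>\<mu>. h 1 ` \<mu>) ` L"
  have arcL': "arc_system X L'"
    unfolding arc_system_def
  proof (intro conjI ballI impI)
    fix \<nu> assume "\<nu> \<in> L'"
    then obtain \<mu> where mu: "\<mu> \<in> L" "\<nu> = h 1 ` \<mu>" unfolding L'_def by blast
    have "arc_in X \<mu>" using LA mu unfolding arc_system_def by blast
    then obtain p where p: "arc_param X p" "\<mu> = p ` {0..1}" unfolding arc_in_def by blast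
    have "arc_param X (\<lambda>s. h 1 (p s))"
      by (rule arc_param_homeo[OF p(1) _ hk RS hX1]) (use p muA[OF mu(1)] in blast)
    moreover have "\<nu> = (\<lambda>s. h 1 (p s)) ` {0..1}" using mu p by (simp add: image_image)
    ultimately show "arc_in X \<nu>" unfolding arc_in_def by blast
  next
    fix \<nu>1 \<nu>2 assume n: "\<nu>1 \<in> L'" "\<nu>2 \<in> L'" "\<nu>1 \<noteq> \<nu>2"
    then obtain \<mu>1 \<mu>2 where mu: "\<mu>1 \<in> L" "\<nu>1 = h 1 ` \<mu>1" "\<mu>2 \<in> L" "\<nu>2 = h 1 ` \<mu>2"
      unfolding L'_def by blast
    have ne: "\<mu>1 \<noteq> \<mu>2" using n mu by blast
    show "\<not> arc_isotopic X \<nu>1 \<nu>2"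
    proof
      assume "arc_isotopic X \<nu>1 \<nu>2"
      then have "arc_isotopic X \<mu>1 \<nu>2" using K1[OF mu(1)] mu(2) by simp
      then have "arc_isotopic X \<mu>1 \<mu>2" using K1'[OF mu(3)] mu(4) by simp
      then show False using LA mu(1,3) ne unfolding arc_system_def by blast
    qed
  qed
  have liftL': "\<forall>\<nu>\<in>L'. \<exists>la\<in>\<Lambda>0. lift_of g X la \<nu>"
  proof
    fix \<nu> assume "\<nu> \<in> L'"
    then obtain \<mu> where mu: "\<mu> \<in> L" "\<nu> = h 1 ` \<mu>" unfolding L'_def by blast
    obtain la where la: "la \<in> \<Lambda>0" "lift_of f X la \<mu>" using Llift mu by blast
    obtain x where x: "x \<in> S2 \<inter> f -` (la - X)"
      and mux: "\<mu> = closure (connected_component_set (S2 \<inter> f -` (la - X)) x)"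
      using la(2) unfolding lift_of_def by blast
    have "arc_in X la" using assms(5) L0 la(1) unfolding arc_system_def by blast
    then obtain q where q: "arc_param X q" "la = q ` {0..1}" unfolding arc_in_def by blast
    have "lift_of g X la (h 1 ` \<mu>)"
      by (rule lift_transport[OF fc fS lf q hk A0S RS gh Dc RD DR ee x mux muA[OF mu(1)]])
    then show "\<exists>la\<in>\<Lambda>0. lift_of g X la \<nu>" using la(1) mu(2) by blast
  qed
  have sysL': "sys_isotopic X L' \<Lambda>"
    unfolding sys_isotopic_def
  proof (intro conjI ballI)
    fix \<nu> assume "\<nu> \<in> L'"
    then obtain \<mu> where mu: "\<mu> \<in> L" "\<nu> = h 1 ` \<mu>" unfolding L'_def by blast
    have "\<exists>!\<rho>. \<rho> \<in> \<Lambda> \<and> arc_isotopic X \<mu> \<rho>" using SI mu(1) unfolding sys_isotopic_def by blast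
    then show "\<exists>!\<rho>. \<rho> \<in> \<Lambda> \<and> arc_isotopic X \<nu> \<rho>" using K1[OF mu(1)] mu(2) by simp
  next
    fix \<rho> assume r: "\<rho> \<in> \<Lambda>"
    have "\<exists>!\<mu>. \<mu> \<in> L \<and> arc_isotopic X \<rho> \<mu>" using SI r unfolding sys_isotopic_def by blast
    then obtain \<mu> where mu: "\<mu> \<in> L" "arc_isotopic X \<rho> \<mu>"
      and uq: "\<And>\<mu>'. \<mu>' \<in> L \<Longrightarrow> arc_isotopic X \<rho> \<mu>' \<Longrightarrow> \<mu>' = \<mu>" by blast
    show "\<exists>!\<nu>. \<nu> \<in> L' \<and> arc_isotopic X \<rho> \<nu>"
    proof (rule ex1I[of _ "h 1 ` \<mu>"])
      show "h 1 ` \<mu> \<in> L' \<and> arc_isotopic X \<rho> (h 1 ` \<mu>)"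
        using mu K1'[OF mu(1)] unfolding L'_def by blast
      fix \<nu> assume n: "\<nu> \<in> L' \<and> arc_isotopic X \<rho> \<nu>"
      then obtain \<mu>' where mu': "\<mu>' \<in> L" "\<nu> = h 1 ` \<mu>'" unfolding L'_def by blast
      have "arc_isotopic X \<rho> \<mu>'" using K1'[OF mu'(1)] n mu'(2) by simp
      then have "\<mu>' = \<mu>" using uq mu'(1) by blast
      then show "\<nu> = h 1 ` \<mu>" using mu'(2) by simp
    qed
  qed
  show ?thesis unfolding forward_invariant_def lift_system_def
    using L0 arcL' liftL' sysL' by blast
qed

end
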